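(* Let $x_1,\dots,x_n\in\mathbb{R}^p$, $\epsilon>0$, $k(x,x')=\exp(-\|x-x'\|^2/(4\epsilon^2))$, $\bar K_{ij}=k(x_i,x_j)$, $\bar A_{ij}=k(x_i,x_j)/(\bar K_{i\cdot}\bar K_{\cdot j})$, $\bar Z_{ij}=\bar A_{ij}/\bar A_{i\cdot}$ for $1\le i,j\le n$, and $\bar\Lambda=\mathrm{diag}(\bar Z_{\cdot1},\dots,\bar Z_{\cdot n})$. Let $\gamma_n=\sup_{1\le i,j\le n}\bar A_{i\cdot}/\bar A_{j\cdot}-1$. Then $\|\bar Z-\bar\Lambda^{-1}\bar Z^\top\|_2\le\sqrt2\,\gamma_n$.
   Context: $B_{i\cdot}=\sum_jB_{ij}$, $B_{\cdot j}=\sum_iB_{ij}$; $\|\cdot\|_2$ is the spectral norm. *)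

theory Defs
  imports "HOL-Analysis.Analysis"
begin

definition gkernel :: "real \<Rightarrow> 'a::real_normed_vector \<Rightarrow> 'a \<Rightarrow> real" where
  "gkernel eps a b = exp (- (norm (a - b))\<^sup>2 / (4 * eps\<^sup>2))"

definition row_sum :: "real^'n^'m \<Rightarrow> 'm \<Rightarrow> real" where
  "row_sum M i = (\<Sum>j\<in>UNIV. M $ i $ j)"

definition col_sum :: "real^'n^'m \<Rightarrow> 'n \<Rightarrow> real" where
  "col_sum M j = (\<Sum>i\<in>UNIV. M $ i $ j)"

definition Kbar :: "real \<Rightarrow> ('n::finite \<Rightarrow> real^'p) \<Rightarrow> real^'n^'n" where
  "Kbar eps x = (\<chi> i j. gkernel eps (x i) (x j))"

definition Abar :: "real \<Rightarrow> ('n::finite \<Rightarrow> real^'p) \<Rightarrow> real^'n^'n" where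
  "Abar eps x = (\<chi> i j. gkernel eps (x i) (x j)
                   / (row_sum (Kbar eps x) i * col_sum (Kbar eps x) j))"

definition Zbar :: "real \<Rightarrow> ('n::finite \<Rightarrow> real^'p) \<Rightarrow> real^'n^'n" where
  "Zbar eps x = (\<chi> i j. Abar eps x $ i $ j / row_sum (Abar eps x) i)"

definition Lambdabar :: "real \<Rightarrow> ('n::finite \<Rightarrow> real^'p) \<Rightarrow> real^'n^'n" where
  "Lambdabar eps x = (\<chi> i j. if i = j then col_sum (Zbar eps x) i else 0)"

definition gamma_n :: "real \<Rightarrow> ('n::finite \<Rightarrow> real^'p) \<Rightarrow> real" where
  "gamma_n eps x = Max {row_sum (Abar eps x) i / row_sum (Abar eps x) j | i j. True} - 1"

text \<open>Spectral norm = operator norm w.r.t. the Euclidean norm.\<close>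
definition spectral_norm :: "real^'n^'m \<Rightarrow> real" where
  "spectral_norm M = onorm (\<lambda>v. M *v v)"

end

theory Submission
  imports Defs
begin

lemma wcs:
  fixes w y :: "'a \<Rightarrow> real"
  assumes "finite S" "\<And>j. j \<in> S \<Longrightarrow> w j \<ge> 0"
  shows "(\<Sum>j\<in>S. w j * y j)\<^sup>2 \<le> (\<Sum>j\<in>S. w j) * (\<Sum>j\<in>S. w j * (y j)\<^sup>2)"
proof -
  have "0 \<le> (\<Sum>j\<in>S. \<Sum>k\<in>S. w j * w k * (y j - y k)\<^sup>2)"
    using assms by (intro sum_nonneg) auto
  also have "\<dots> = (\<Sum>j\<in>S. \<Sum>k\<in>S. w j * (w k * (y k)\<^sup>2) + (w j * (y j)\<^sup>2) * w k - 2 * ((w j * y j) * (w k * y k)))"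
    by (intro sum.cong refl) (simp add: power2_eq_square algebra_simps)
  also have "\<dots> = (\<Sum>j\<in>S. \<Sum>k\<in>S. w j * (w k * (y k)\<^sup>2)) + (\<Sum>j\<in>S. \<Sum>k\<in>S. (w j * (y j)\<^sup>2) * w k) - 2 * (\<Sum>j\<in>S. \<Sum>k\<in>S. (w j * y j) * (w k * y k))"
    by (simp only: sum.distrib sum_subtractf sum_distrib_left)
  also have "\<dots> = 2 * ((\<Sum>j\<in>S. w j) * (\<Sum>j\<in>S. w j * (y j)\<^sup>2)) - 2 * (\<Sum>j\<in>S. w j * y j)\<^sup>2"
    by (simp only: sum_product[symmetric] power2_eq_square) (simp add: mult.commute)
  finally show ?thesis by simp
qed

lemma schur:
  fixes M :: "'n::finite \<Rightarrow> 'n \<Rightarrow> real" and v :: "'n \<Rightarrow> real"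
  assumes R: "\<And>i. (\<Sum>j\<in>UNIV. \<bar>M i j\<bar>) \<le> R" and C: "\<And>j. (\<Sum>i\<in>UNIV. \<bar>M i j\<bar>) \<le> C" and "0 \<le> R"
  shows "(\<Sum>i\<in>UNIV. (\<Sum>j\<in>UNIV. M i j * v j)\<^sup>2) \<le> R * C * (\<Sum>j\<in>UNIV. (v j)\<^sup>2)"
proof -
  have step: "(\<Sum>j\<in>UNIV. M i j * v j)\<^sup>2 \<le> R * (\<Sum>j\<in>UNIV. \<bar>M i j\<bar> * (v j)\<^sup>2)" for i
  proof -
    have "\<bar>\<Sum>j\<in>UNIV. M i j * v j\<bar> \<le> (\<Sum>j\<in>UNIV. \<bar>M i j\<bar> * \<bar>v j\<bar>)"
      by (rule order_trans[OF sum_abs]) (simp add: abs_mult)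
    hence "(\<Sum>j\<in>UNIV. M i j * v j)\<^sup>2 \<le> (\<Sum>j\<in>UNIV. \<bar>M i j\<bar> * \<bar>v j\<bar>)\<^sup>2"
      by (metis abs_ge_zero power2_abs power_mono)
    also have "\<dots> \<le> (\<Sum>j\<in>UNIV. \<bar>M i j\<bar>) * (\<Sum>j\<in>UNIV. \<bar>M i j\<bar> * \<bar>v j\<bar>\<^sup>2)"
      by (rule wcs) auto
    also have "\<dots> \<le> R * (\<Sum>j\<in>UNIV. \<bar>M i j\<bar> * (v j)\<^sup>2)"
      by (simp add: R mult_right_mono sum_nonneg)
    finally show ?thesis .
  qed
  have "(\<Sum>i\<in>UNIV. (\<Sum>j\<in>UNIV. M i j * v j)\<^sup>2) \<le> (\<Sum>i\<in>UNIV. R * (\<Sum>j\<in>UNIV. \<bar>M i j\<bar> * (v j)\<^sup>2))"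
    by (rule sum_mono) (rule step)
  also have "\<dots> = R * (\<Sum>i\<in>UNIV. \<Sum>j\<in>UNIV. \<bar>M i j\<bar> * (v j)\<^sup>2)"
    by (simp add: sum_distrib_left)
  also have "\<dots> = R * (\<Sum>j\<in>UNIV. \<Sum>i\<in>UNIV. \<bar>M i j\<bar> * (v j)\<^sup>2)"
    by (rule arg_cong[where f="\<lambda>t. R * t"], rule sum.swap)
  also have "\<dots> = R * (\<Sum>j\<in>UNIV. (\<Sum>i\<in>UNIV. \<bar>M i j\<bar>) * (v j)\<^sup>2)"
    by (simp add: sum_distrib_right)
  also have "\<dots> \<le> R * (\<Sum>j\<in>UNIV. C * (v j)\<^sup>2)"
    using assms by (intro mult_left_mono sum_mono mult_right_mono) auto
  finally show ?thesis by (simp add: sum_distrib_left mult.assoc)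
qed

lemma core:
  fixes A :: "'n::finite \<Rightarrow> 'n \<Rightarrow> real" and g :: real and a lam :: "'n \<Rightarrow> real"
  assumes pos: "\<And>i j. A i j > 0" and sym: "\<And>i j. A i j = A j i"
    and a_def: "\<And>i. a i = (\<Sum>j\<in>UNIV. A i j)"
    and lam_def: "\<And>i. lam i = (\<Sum>k\<in>UNIV. A k i / a k)"
    and gb: "\<And>k l. a k / a l \<le> 1 + g"
  shows "g \<ge> 0"
    and "\<And>i. (\<Sum>j\<in>UNIV. \<bar>A i j / a i - A j i / (a j * lam i)\<bar>) \<le> g"
    and "\<And>j. (\<Sum>i\<in>UNIV. \<bar>A i j / a i - A j i / (a j * lam i)\<bar>) \<le> 2 * g"
proof -
  have apos: "a i > 0" for i
    unfolding a_def using pos by (intro sum_pos) auto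
  have lampos: "lam i > 0" for i
    unfolding lam_def using pos apos by (intro sum_pos) auto
  have "a undefined / a undefined = 1" using apos[of undefined] by simp
  then show g0: "g \<ge> 0" using gb[of undefined undefined] by linarith
  have F: "\<bar>a l - a k\<bar> \<le> g * a l" for k l
  proof -
    have "a k \<le> (1 + g) * a l" using gb[of k l] apos[of l] by (simp add: divide_le_eq)
    hence h1: "a k - a l \<le> g * a l" by (simp add: algebra_simps)
    have "a l \<le> (1 + g) * a k" using gb[of l k] apos[of k] by (simp add: divide_le_eq)
    hence h2: "a l - a k \<le> g * a k" by (simp add: algebra_simps)
    have h3: "a l - a k \<le> g * a l"
    proof (cases "a k \<le> a l")
      case True
      hence "g * a k \<le> g * a l" using g0 by (rule mult_left_mono)
      thus ?thesis using h2 by linarith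
    next
      case False
      thus ?thesis using g0 apos[of l] by (smt (verit) mult_nonneg_nonneg)
    qed
    show ?thesis using h1 h3 by (simp add: abs_le_iff)
  qed
  have lam': "lam i = (\<Sum>k\<in>UNIV. A i k / a k)" for i
    unfolding lam_def by (intro sum.cong refl) (simp add: sym[of _ i])
  have RB: "\<bar>A i j / a i - A j i / (a j * lam i)\<bar> \<le> g * (A i j / a i)" for i j
  proof -
    have pw: "A i k / a k * a j - A i k = A i k * (a j - a k) / a k" for k
      using apos[of k] by (simp add: field_simps)
    have eq1: "a j * lam i - a i = (\<Sum>k\<in>UNIV. A i k * (a j - a k) / a k)"
      unfolding lam' a_def[of i] sum_distrib_left
      by (simp add: sum_subtractf[symmetric] pw[symmetric] mult.commute)
    have "\<bar>a j * lam i - a i\<bar> \<le> (\<Sum>k\<in>UNIV. \<bar>A i k * (a j - a k) / a k\<bar>)"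
      unfolding eq1 by (rule sum_abs)
    also have "\<dots> \<le> (\<Sum>k\<in>UNIV. g * a j * (A i k / a k))"
    proof (rule sum_mono)
      fix k
      have "\<bar>A i k * (a j - a k) / a k\<bar> = (A i k / a k) * \<bar>a j - a k\<bar>"
        using pos[of i k] apos[of k] by (simp add: abs_mult abs_divide)
      also have "\<dots> \<le> (A i k / a k) * (g * a j)"
        using F[where k=k and l=j] pos[of i k] apos[of k] by (intro mult_left_mono) auto
      finally show "\<bar>A i k * (a j - a k) / a k\<bar> \<le> g * a j * (A i k / a k)" by (simp only: mult_ac)
    qed
    also have "\<dots> = g * (a j * lam i)" unfolding lam' by (simp add: sum_distrib_left mult.assoc)
    finally have D: "\<bar>a j * lam i - a i\<bar> \<le> g * (a j * lam i)" .
    have ne: "a i \<noteq> 0" "a j * lam i \<noteq> 0" using apos[of i] apos[of j] lampos[of i] by auto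
    have e: "A i j / a i - A j i / (a j * lam i) = (A i j / (a i * (a j * lam i))) * (a j * lam i - a i)"
      unfolding sym[of j i] using ne by (simp add: divide_simps) (simp add: algebra_simps)
    have "\<bar>A i j / a i - A j i / (a j * lam i)\<bar> = (A i j / (a i * (a j * lam i))) * \<bar>a j * lam i - a i\<bar>"
      unfolding e abs_mult using pos[of i j] apos[of i] apos[of j] lampos[of i] by simp
    also have "\<dots> \<le> (A i j / (a i * (a j * lam i))) * (g * (a j * lam i))"
      using D pos[of i j] apos[of i] apos[of j] lampos[of i] by (intro mult_left_mono) auto
    also have "\<dots> = g * (A i j / a i)"
      using ne by simp
    finally show ?thesis .
  qed
  show "(\<Sum>j\<in>UNIV. \<bar>A i j / a i - A j i / (a j * lam i)\<bar>) \<le> g" for i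
  proof -
    have "(\<Sum>j\<in>UNIV. \<bar>A i j / a i - A j i / (a j * lam i)\<bar>) \<le> (\<Sum>j\<in>UNIV. g * (A i j / a i))"
      by (rule sum_mono) (rule RB)
    also have "\<dots> = g * (a i / a i)" by (simp only: sum_distrib_left[symmetric] sum_divide_distrib[symmetric] a_def[symmetric])
    finally show ?thesis using apos[of i] by simp
  qed
  have LB: "\<bar>lam i - 1\<bar> \<le> g * lam i" for i
  proof -
    have pw: "A i k / a k - A i k / a i = A i k * (a i - a k) / (a k * a i)" for k
      using apos[of k] apos[of i] by (simp add: field_simps)
    have eq1: "lam i - 1 = (\<Sum>k\<in>UNIV. A i k * (a i - a k) / (a k * a i))"
    proof -
      have "(\<Sum>k\<in>UNIV. A i k / a i) = a i / a i" by (simp only: sum_divide_distrib[symmetric] a_def[symmetric])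
      hence "1 = (\<Sum>k\<in>UNIV. A i k / a i)" using apos[of i] by simp
      hence "lam i - 1 = (\<Sum>k\<in>UNIV. A i k / a k - A i k / a i)" by (simp add: lam' sum_subtractf)
      also have "\<dots> = (\<Sum>k\<in>UNIV. A i k * (a i - a k) / (a k * a i))"
        by (simp only: pw)
      finally show ?thesis .
    qed
    have "\<bar>lam i - 1\<bar> \<le> (\<Sum>k\<in>UNIV. \<bar>A i k * (a i - a k) / (a k * a i)\<bar>)"
      unfolding eq1 by (rule sum_abs)
    also have "\<dots> \<le> (\<Sum>k\<in>UNIV. g * (A i k / a k))"
    proof (rule sum_mono)
      fix k
      have "\<bar>A i k * (a i - a k) / (a k * a i)\<bar> = (A i k / (a k * a i)) * \<bar>a i - a k\<bar>"
        using pos[of i k] apos[of k] apos[of i] by (simp add: abs_mult abs_divide)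
      also have "\<dots> \<le> (A i k / (a k * a i)) * (g * a i)"
        using F[where k=k and l=i] pos[of i k] apos[of k] apos[of i] by (intro mult_left_mono) auto
      also have "\<dots> = g * (A i k / a k)" using apos[of i] by simp
      finally show "\<bar>A i k * (a i - a k) / (a k * a i)\<bar> \<le> g * (A i k / a k)" .
    qed
    also have "\<dots> = g * lam i" unfolding lam' by (simp add: sum_distrib_left)
    finally show ?thesis .
  qed
  have CB: "\<bar>A i j / a i - A j i / (a j * lam i)\<bar> \<le> 2 * g * (A i j / a j)" for i j
  proof -
    have split: "A i j / a i - A j i / (a j * lam i) = (A i j * (1 / a i - 1 / a j)) + (A i j / a j) * (1 - 1 / lam i)"
      unfolding sym[of j i] using apos[of i] apos[of j] lampos[of i] by (simp add: field_simps)
    have t1: "\<bar>A i j * (1 / a i - 1 / a j)\<bar> \<le> g * (A i j / a j)"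
    proof -
      have "1 / a i - 1 / a j = (a j - a i) / (a i * a j)"
        using apos[of i] apos[of j] by (simp add: field_simps)
      hence "\<bar>A i j * (1 / a i - 1 / a j)\<bar> = (A i j / (a i * a j)) * \<bar>a j - a i\<bar>"
        using pos[of i j] apos[of i] apos[of j] by (simp add: abs_mult abs_divide)
      also have "\<dots> \<le> (A i j / (a i * a j)) * (g * a i)"
        using F[where k=j and l=i] pos[of i j] apos[of i] apos[of j]
        by (intro mult_left_mono) (auto simp: abs_minus_commute)
      also have "\<dots> = g * (A i j / a j)" using apos[of i] by simp
      finally show ?thesis .
    qed
    have t2: "\<bar>(A i j / a j) * (1 - 1 / lam i)\<bar> \<le> g * (A i j / a j)"
    proof -
      have "1 - 1 / lam i = (lam i - 1) / lam i" using lampos[of i] by (simp add: field_simps)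
      hence "\<bar>1 - 1 / lam i\<bar> = \<bar>lam i - 1\<bar> / lam i" using lampos[of i] by (simp add: abs_divide)
      also have "\<dots> \<le> g" using LB[of i] lampos[of i] by (simp add: divide_le_eq)
      finally have "\<bar>1 - 1 / lam i\<bar> \<le> g" .
      hence "(A i j / a j) * \<bar>1 - 1 / lam i\<bar> \<le> (A i j / a j) * g"
        using pos[of i j] apos[of j] by (intro mult_left_mono) auto
      thus ?thesis using pos[of i j] apos[of j] by (simp add: abs_mult mult.commute)
    qed
    show ?thesis unfolding split using t1 t2 abs_triangle_ineq[of "A i j * (1 / a i - 1 / a j)" "(A i j / a j) * (1 - 1 / lam i)"]
      by linarith
  qed
  show "(\<Sum>i\<in>UNIV. \<bar>A i j / a i - A j i / (a j * lam i)\<bar>) \<le> 2 * g" for j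
  proof -
    have "(\<Sum>i\<in>UNIV. \<bar>A i j / a i - A j i / (a j * lam i)\<bar>) \<le> (\<Sum>i\<in>UNIV. 2 * g * (A i j / a j))"
      by (rule sum_mono) (rule CB)
    also have "\<dots> = 2 * g * ((\<Sum>i\<in>UNIV. A j i) / a j)"
      by (simp add: sum_distrib_left sum_divide_distrib sym[of _ j])
    finally show ?thesis using apos[of j] by (simp add: a_def[symmetric])
  qed
qed

lemma diag_inv:
  fixes lam :: "'n::finite \<Rightarrow> real"
  assumes "\<And>i. lam i \<noteq> 0"
  shows "matrix_inv ((\<chi> i j. if i = j then lam i else 0) :: real^'n^'n) = (\<chi> i j. if i = j then 1 / lam i else 0)"
proof -
  define L :: "real^'n^'n" where "L = (\<chi> i j. if i = j then lam i else 0)"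
  define D :: "real^'n^'n" where "D = (\<chi> i j. if i = j then 1 / lam i else 0)"
  have LD: "L ** D = mat 1" using assms
    by (simp add: L_def D_def matrix_matrix_mult_def mat_def vec_eq_iff if_distrib[of "\<lambda>t. t * _"] cong: if_cong)
  have DL: "D ** L = mat 1" using assms
    by (simp add: L_def D_def matrix_matrix_mult_def mat_def vec_eq_iff if_distrib[of "\<lambda>t. t * _"] cong: if_cong)
  have "L ** matrix_inv L = mat 1 \<and> matrix_inv L ** L = mat 1"
    unfolding matrix_inv_def by (rule someI[of _ D]) (use LD DL in auto)
  hence B: "matrix_inv L ** L = mat 1" by blast
  have "matrix_inv L = matrix_inv L ** (L ** D)" by (simp add: LD)
  also have "\<dots> = D" by (simp add: matrix_mul_assoc B)
  finally show ?thesis by (simp add: L_def D_def)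
qed

theorem lemma4:
  fixes x :: "'n::finite \<Rightarrow> real^'p" and eps :: real
  assumes "eps > 0"
  shows "spectral_norm (Zbar eps x - matrix_inv (Lambdabar eps x) ** transpose (Zbar eps x))
           \<le> sqrt 2 * gamma_n eps x"
proof -
  define Kf where "Kf i j = gkernel eps (x i) (x j)" for i j
  define r where "r i = row_sum (Kbar eps x) i" for i
  define Af where "Af i j = Abar eps x $ i $ j" for i j
  define a where "a i = row_sum (Abar eps x) i" for i
  define lam where "lam i = col_sum (Zbar eps x) i" for i
  define g where "g = gamma_n eps x"
  have Kpos: "Kf i j > 0" for i j by (simp add: Kf_def gkernel_def)
  have Ksym: "Kf i j = Kf j i" for i j by (simp add: Kf_def gkernel_def norm_minus_commute)
  have r_eq: "r i = (\<Sum>j\<in>UNIV. Kf i j)" for i by (simp add: r_def row_sum_def Kbar_def Kf_def)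
  have rpos: "r i > 0" for i unfolding r_eq using Kpos by (intro sum_pos) auto
  have c_eq: "col_sum (Kbar eps x) j = r j" for j
    unfolding col_sum_def r_eq by (simp add: Kbar_def Kf_def[symmetric] Ksym[of _ j])
  have Af_eq: "Af i j = Kf i j / (r i * r j)" for i j
    by (simp add: Af_def Abar_def Kf_def r_def c_eq)
  have Apos: "Af i j > 0" for i j unfolding Af_eq using Kpos rpos by simp
  have Asym: "Af i j = Af j i" for i j unfolding Af_eq by (simp add: Ksym mult.commute)
  have a_eq: "a i = (\<Sum>j\<in>UNIV. Af i j)" for i by (simp add: a_def row_sum_def Af_def)
  have Z_eq: "Zbar eps x $ i $ j = Af i j / a i" for i j by (simp add: Zbar_def Af_def a_def)
  have lam_eq: "lam i = (\<Sum>k\<in>UNIV. Af k i / a k)" for i by (simp add: lam_def col_sum_def Z_eq)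
  have apos: "a i > 0" for i unfolding a_eq using Apos by (intro sum_pos) auto
  have lampos: "lam i > 0" for i unfolding lam_eq using Apos apos by (intro sum_pos) auto
  have Lam_eq: "Lambdabar eps x = (\<chi> i j. if i = j then lam i else 0)"
    unfolding Lambdabar_def lam_def by simp
  have inv_eq: "matrix_inv (Lambdabar eps x) = (\<chi> i j. if i = j then 1 / lam i else 0)"
    unfolding Lam_eq by (rule diag_inv) (use lampos in \<open>auto simp: less_le\<close>)
  define Mm where "Mm = Zbar eps x - matrix_inv (Lambdabar eps x) ** transpose (Zbar eps x)"
  have M_eq: "Mm $ i $ j = Af i j / a i - Af j i / (a j * lam i)" for i j
    by (simp add: Mm_def inv_eq matrix_matrix_mult_def transpose_def Z_eq if_distrib[of "\<lambda>t. t * _"] if_distrib[of "\<lambda>t. t / _"] cong: if_cong)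
  have fin: "finite {row_sum (Abar eps x) i / row_sum (Abar eps x) j | i j. True}"
    by (rule finite_subset[of _ "(\<lambda>(i,j). row_sum (Abar eps x) i / row_sum (Abar eps x) j) ` UNIV"]) auto
  have gb: "a k / a l \<le> 1 + g" for k l
  proof -
    have "a k / a l \<le> Max {row_sum (Abar eps x) i / row_sum (Abar eps x) j | i j. True}"
      by (rule Max_ge[OF fin]) (auto simp: a_def)
    thus ?thesis by (simp add: g_def gamma_n_def)
  qed
  note C = core[of Af a lam g, OF Apos Asym a_eq lam_eq gb]
  have bound: "norm (Mm *v v) \<le> sqrt 2 * g * norm v" for v
  proof -
    have "(\<Sum>i\<in>UNIV. (\<Sum>j\<in>UNIV. Mm $ i $ j * v $ j)\<^sup>2) \<le> g * (2 * g) * (\<Sum>j\<in>UNIV. (v $ j)\<^sup>2)"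
      by (rule schur) (use C in \<open>auto simp: M_eq\<close>)
    hence "sqrt (\<Sum>i\<in>UNIV. (\<Sum>j\<in>UNIV. Mm $ i $ j * v $ j)\<^sup>2) \<le> sqrt (g * (2 * g) * (\<Sum>j\<in>UNIV. (v $ j)\<^sup>2))"
      by (rule real_sqrt_le_mono)
    also have "\<dots> = sqrt 2 * g * sqrt (\<Sum>j\<in>UNIV. (v $ j)\<^sup>2)"
      using C(1) by (simp add: real_sqrt_mult power2_eq_square[symmetric] mult.commute mult.left_commute)
    finally show ?thesis
      by (simp add: norm_vec_def L2_set_def matrix_vector_mult_def)
  qed
  have "spectral_norm Mm \<le> sqrt 2 * g"
    unfolding spectral_norm_def by (rule onorm_bound) (use C(1) bound in auto)
  thus ?thesis by (simp add: Mm_def g_def)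
qed
end
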